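(* Let $n\geq 4$ and $m>3$ be integers and let $\psi$ be an automorphism of $\mathcal{CSR}(m,n)$. Let $a\neq b$ in $[m]$ and let $\xi,\xi'$ be vertices. If $\psi(\xi+S_{ab})=\varsigma+S_{pq}$ and $\psi(\xi'+S_{ab})=\varsigma'+S_{rs}$ for some vertices $\varsigma,\varsigma'$ and some $p\neq q$, $r\neq s$ in $[m]$, then $\{p,q\}=\{r,s\}$.
   Context: For positive integers $m,n$, the cyclic simplicial rook graph $\mathcal{CSR}(m,n)$ is the graph whose vertices are the vectors $(a_1,\dots,a_m)\in\mathbb{Z}_n^m$ with $a_1+\cdots+a_m\equiv 0 \pmod n$, two vertices being adjacent if and only if their vectors differ in exactly two coordinates. $[m]=\{1,\dots,m\}$; $e_i\in\mathbb{Z}_n^m$ is the vector with $1$ in coordinate $i$ and $0$ elsewhere; for distinct $a,b\in[m]$, $S_{ab}=\{\alpha(e_a-e_b)\mid \alpha\in\mathbb{Z}_n\}$; and $x+A=\{x+y\mid y\in A\}$. *)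

theory Defs
  imports Main
begin

text \<open>Vectors of Z_n^m are represented as functions nat => int with values in
{0..<n} on the index set [m] = {1..m} and value 0 outside [m].
All arithmetic is taken mod n.\<close>

definition csr_verts :: "nat \<Rightarrow> nat \<Rightarrow> (nat \<Rightarrow> int) set" where
  "csr_verts m n = {x. (\<forall>i\<in>{1..m}. x i \<in> {0..<int n}) \<and> (\<forall>i. i \<notin> {1..m} \<longrightarrow> x i = 0)
                      \<and> (\<Sum>i\<in>{1..m}. x i) mod int n = 0}"

definition csr_adj :: "nat \<Rightarrow> (nat \<Rightarrow> int) \<Rightarrow> (nat \<Rightarrow> int) \<Rightarrow> bool" where
  "csr_adj m x y \<longleftrightarrow> card {i\<in>{1..m}. x i \<noteq> y i} = 2"

definition csr_aut :: "nat \<Rightarrow> nat \<Rightarrow> ((nat \<Rightarrow> int) \<Rightarrow> (nat \<Rightarrow> int)) \<Rightarrow> bool" where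
  "csr_aut m n \<psi> \<longleftrightarrow> bij_betw \<psi> (csr_verts m n) (csr_verts m n) \<and>
     (\<forall>x\<in>csr_verts m n. \<forall>y\<in>csr_verts m n. csr_adj m (\<psi> x) (\<psi> y) \<longleftrightarrow> csr_adj m x y)"

definition unitv :: "nat \<Rightarrow> nat \<Rightarrow> int" ("e\<^sub>_") where
  "unitv i = (\<lambda>j. if j = i then 1 else 0)"

definition vadd :: "nat \<Rightarrow> (nat \<Rightarrow> int) \<Rightarrow> (nat \<Rightarrow> int) \<Rightarrow> (nat \<Rightarrow> int)" where
  "vadd n x y = (\<lambda>i. (x i + y i) mod int n)"

definition S_set :: "nat \<Rightarrow> nat \<Rightarrow> nat \<Rightarrow> (nat \<Rightarrow> int) set" where
  "S_set n a b = {(\<lambda>i. (\<alpha> * (unitv a i - unitv b i)) mod int n) | \<alpha>. \<alpha> \<in> {0..<int n}}"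

definition coset :: "nat \<Rightarrow> (nat \<Rightarrow> int) \<Rightarrow> (nat \<Rightarrow> int) set \<Rightarrow> (nat \<Rightarrow> int) set" where
  "coset n x A = vadd n x ` A"

end

theory Submission
  imports Defs
begin

definition dset :: "nat \<Rightarrow> (nat \<Rightarrow> int) \<Rightarrow> (nat \<Rightarrow> int) \<Rightarrow> nat set" where
  "dset m x y = {i\<in>{1..m}. x i \<noteq> y i}"

definition lineD :: "nat \<Rightarrow> nat \<Rightarrow> (nat \<Rightarrow> int) \<Rightarrow> nat set \<Rightarrow> (nat \<Rightarrow> int) set" where
  "lineD m n x P = {z \<in> csr_verts m n. dset m x z \<subseteq> P}"

definition mv :: "nat \<Rightarrow> (nat \<Rightarrow> int) \<Rightarrow> nat \<Rightarrow> nat \<Rightarrow> int \<Rightarrow> (nat \<Rightarrow> int)" where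
  "mv n x i j t = x(i := t, j := (x j + x i - t) mod int n)"

lemma mem_dset: "i \<in> dset m x y \<longleftrightarrow> i \<in> {1..m} \<and> x i \<noteq> y i"
  by (simp add: dset_def)

lemma dset_sym: "dset m x y = dset m y x"
  by (auto simp: dset_def)

lemma dset_trans: "dset m x z \<subseteq> dset m x y \<union> dset m y z"
  by (auto simp: dset_def)

lemma finite_dset: "finite (dset m x y)"
  by (simp add: dset_def)

lemma vertsD: "x \<in> csr_verts m n \<Longrightarrow> i \<in> {1..m} \<Longrightarrow> 0 \<le> x i \<and> x i < int n"
  by (auto simp: csr_verts_def)

lemma verts_out: "x \<in> csr_verts m n \<Longrightarrow> i \<notin> {1..m} \<Longrightarrow> x i = 0"
  by (auto simp: csr_verts_def)

lemma verts_sum: "x \<in> csr_verts m n \<Longrightarrow> (\<Sum>i\<in>{1..m}. x i) mod int n = 0"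
  by (auto simp: csr_verts_def)

lemma sum_diff:
  assumes "dset m x y \<subseteq> P" "P \<subseteq> {1..m}"
  shows "(\<Sum>i\<in>{1..m}. y i) - (\<Sum>i\<in>{1..m}. x i) = (\<Sum>i\<in>P. y i - x i)"
proof -
  have "(\<Sum>i\<in>{1..m}. y i) - (\<Sum>i\<in>{1..m}. x i) = (\<Sum>i\<in>{1..m}. y i - x i)"
    by (simp add: sum_subtractf)
  also have "\<dots> = (\<Sum>i\<in>P. y i - x i)"
  proof (rule sum.mono_neutral_right)
    show "\<forall>i\<in>{1..m} - P. y i - x i = 0" using assms by (auto simp: dset_def)
  qed (use assms in auto)
  finally show ?thesis .
qed

lemma mod_zero_small:
  fixes d :: int
  assumes "d mod int n = 0" "- int n < d" "d < int n"
  shows "d = 0"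
proof -
  have "int n dvd d" using assms(1) by auto
  then obtain k where "d = int n * k" by auto
  with assms show ?thesis
    by (smt (verit, best) mult_less_cancel_left2 mult_minus_right mult_less_0_iff mult_right_less_imp_less)
qed

lemma dset_single:
  assumes "x \<in> csr_verts m n" "y \<in> csr_verts m n" "n > 0" "dset m x y = {i}"
  shows False
proof -
  have i: "i \<in> {1..m}" "x i \<noteq> y i" using assms(4) by (auto simp: dset_def)
  have "(\<Sum>i\<in>{1..m}. y i) - (\<Sum>i\<in>{1..m}. x i) = y i - x i"
    using sum_diff[of m x y "{i}"] assms(4) i by auto
  moreover have "((\<Sum>i\<in>{1..m}. y i) - (\<Sum>i\<in>{1..m}. x i)) mod int n = 0"
    using verts_sum[OF assms(1)] verts_sum[OF assms(2)] by (simp add: mod_diff_eq[symmetric])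
  ultimately have "(y i - x i) mod int n = 0" by simp
  moreover have "- int n < y i - x i" "y i - x i < int n"
    using vertsD[OF assms(1) i(1)] vertsD[OF assms(2) i(1)] by auto
  ultimately have "y i - x i = 0" by (rule mod_zero_small)
  with i show False by simp
qed

lemma dset_empty:
  assumes "x \<in> csr_verts m n" "y \<in> csr_verts m n" "dset m x y = {}"
  shows "x = y"
proof
  fix i show "x i = y i"
  proof (cases "i \<in> {1..m}")
    case True then show ?thesis using assms(3) by (auto simp: dset_def)
  next
    case False then show ?thesis using verts_out[OF assms(1)] verts_out[OF assms(2)] by simp
  qed
qed

lemma dset_sub_eq:
  assumes "x \<in> csr_verts m n" "y \<in> csr_verts m n" "n > 0" "dset m x y \<subseteq> {i,j}" "x \<noteq> y" "i \<noteq> j"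
  shows "dset m x y = {i,j}"
proof -
  have "dset m x y \<noteq> {}" using dset_empty assms by blast
  moreover have "dset m x y \<noteq> {i}" "dset m x y \<noteq> {j}" using dset_single assms by blast+
  ultimately show ?thesis using assms(4) by blast
qed

lemma F4:
  assumes "x \<in> csr_verts m n" "y \<in> csr_verts m n" "z \<in> csr_verts m n" "n > 0"
    "dset m x y \<subseteq> {i,j}" "dset m x z \<subseteq> {i,j}" "y i = z i"
  shows "y = z"
proof -
  have "dset m y z \<subseteq> {j}"
  proof
    fix l assume l: "l \<in> dset m y z"
    then have "l \<in> dset m y x \<union> dset m x z" using dset_trans by blast
    then have "l \<in> {i,j}" using assms(5,6) dset_sym by blast
    moreover have "l \<noteq> i" using l assms(7) by (auto simp: dset_def)
    ultimately show "l \<in> {j}" by auto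
  qed
  then have "dset m y z = {} \<or> dset m y z = {j}" by blast
  then show ?thesis using dset_empty dset_single assms by blast
qed

lemma adj_iff: "csr_adj m x y \<longleftrightarrow> card (dset m x y) = 2"
  by (simp add: csr_adj_def dset_def)

lemma adj_sym: "csr_adj m x y \<longleftrightarrow> csr_adj m y x"
  by (simp add: adj_iff dset_sym)

lemma adj_of_sub:
  assumes "x \<in> csr_verts m n" "y \<in> csr_verts m n" "n > 0" "dset m x y \<subseteq> {i,j}" "x \<noteq> y" "i \<noteq> j"
  shows "csr_adj m x y"
  using dset_sub_eq[OF assms] assms(6) by (simp add: adj_iff)

lemma not_adj3:
  assumes "i \<in> dset m x y" "j \<in> dset m x y" "k \<in> dset m x y" "i \<noteq> j" "j \<noteq> k" "i \<noteq> k"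
  shows "\<not> csr_adj m x y"
proof -
  have "card {i,j,k} \<le> card (dset m x y)"
    using assms by (intro card_mono finite_dset) auto
  then show ?thesis using assms by (simp add: adj_iff)
qed

lemma adj_pair:
  assumes "csr_adj m x y" shows "\<exists>i j. i \<noteq> j \<and> dset m x y = {i,j}"
  using assms unfolding adj_iff card_2_iff by blast

lemma adj_eq2:
  assumes "csr_adj m x y" "i \<in> dset m x y" "j \<in> dset m x y" "i \<noteq> j"
  shows "dset m x y = {i,j}"
  using assms by (auto simp: adj_iff card_2_iff)

lemma mv_i: "i \<noteq> j \<Longrightarrow> mv n x i j t i = t" by (simp add: mv_def)
lemma mv_j: "mv n x i j t j = (x j + x i - t) mod int n" by (simp add: mv_def)
lemma mv_other: "l \<noteq> i \<Longrightarrow> l \<noteq> j \<Longrightarrow> mv n x i j t l = x l" by (simp add: mv_def)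

lemma mv_dset: "dset m x (mv n x i j t) \<subseteq> {i,j}"
  by (auto simp: dset_def mv_def)

lemma mv_verts:
  assumes "x \<in> csr_verts m n" "n > 0" "i \<in> {1..m}" "j \<in> {1..m}" "i \<noteq> j" "0 \<le> t" "t < int n"
  shows "mv n x i j t \<in> csr_verts m n"
proof -
  let ?y = "mv n x i j t"
  have "(\<Sum>l\<in>{1..m}. ?y l) - (\<Sum>l\<in>{1..m}. x l) = (\<Sum>l\<in>{i,j}. ?y l - x l)"
    using sum_diff[OF mv_dset] assms by auto
  also have "\<dots> = (t - x i) + ((x j + x i - t) mod int n - x j)"
    using assms(5) by (simp add: mv_def)
  finally have e: "(\<Sum>l\<in>{1..m}. ?y l) = (\<Sum>l\<in>{1..m}. x l) + (t - x i) + ((x j + x i - t) mod int n - x j)"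
    by simp
  have "(\<Sum>l\<in>{1..m}. ?y l) mod int n = ((\<Sum>l\<in>{1..m}. x l) + (t - x i) + ((x j + x i - t) - x j)) mod int n"
    unfolding e by (metis (no_types, opaque_lifting) mod_add_left_eq mod_add_right_eq mod_diff_left_eq)
  also have "\<dots> = (\<Sum>l\<in>{1..m}. x l) mod int n" by simp
  also have "\<dots> = 0" using verts_sum[OF assms(1)] .
  finally have s: "(\<Sum>l\<in>{1..m}. ?y l) mod int n = 0" .
  show ?thesis
    unfolding csr_verts_def
  proof (intro CollectI conjI ballI allI impI)
    fix l assume "l \<in> {1..m}"
    then show "?y l \<in> {0..<int n}" using assms vertsD[OF assms(1)] by (auto simp: mv_def)
  next
    fix l assume "l \<notin> {1..m}"
    then show "?y l = 0" using assms verts_out[OF assms(1)] by (auto simp: mv_def)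
  qed (use s in auto)
qed

lemma self_in_lineD: "x \<in> csr_verts m n \<Longrightarrow> x \<in> lineD m n x P"
  by (simp add: lineD_def dset_def)

lemma mv_in_lineD:
  assumes "x \<in> csr_verts m n" "n > 0" "i \<in> {1..m}" "j \<in> {1..m}" "i \<noteq> j" "0 \<le> t" "t < int n"
  shows "mv n x i j t \<in> lineD m n x {i,j}"
  using mv_verts[OF assms] mv_dset by (simp add: lineD_def)

lemma lineD_same:
  assumes "x \<in> csr_verts m n" "z \<in> lineD m n x P"
  shows "lineD m n z P = lineD m n x P"
  using assms dset_trans[of m x _ z] dset_trans[of m z _ x] dset_sym[of m x z]
  unfolding lineD_def by blast

lemma lineD_mv_eq:
  assumes "x \<in> csr_verts m n" "n > 0" "i \<in> {1..m}" "j \<in> {1..m}" "i \<noteq> j" "z \<in> lineD m n x {i,j}"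
  shows "z = mv n x i j (z i)"
proof -
  have z: "z \<in> csr_verts m n" "dset m x z \<subseteq> {i,j}" using assms(6) by (auto simp: lineD_def)
  have "mv n x i j (z i) \<in> lineD m n x {i,j}"
    using vertsD[OF z(1) assms(3)] by (intro mv_in_lineD assms) auto
  then show ?thesis
    using F4[OF assms(1) z(1) _ assms(2) z(2)] assms(5) by (auto simp: lineD_def mv_i)
qed

lemma lineD_image:
  assumes "x \<in> csr_verts m n" "n > 0" "i \<in> {1..m}" "j \<in> {1..m}" "i \<noteq> j"
  shows "lineD m n x {i,j} = (\<lambda>t. mv n x i j t) ` {0..<int n}"
proof
  show "lineD m n x {i, j} \<subseteq> (\<lambda>t. mv n x i j t) ` {0..<int n}"
  proof
    fix z assume z: "z \<in> lineD m n x {i,j}"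
    then have "z i \<in> {0..<int n}" using vertsD assms(3) by (auto simp: lineD_def)
    then show "z \<in> (\<lambda>t. mv n x i j t) ` {0..<int n}"
      using lineD_mv_eq[OF assms z] by blast
  qed
  show "(\<lambda>t. mv n x i j t) ` {0..<int n} \<subseteq> lineD m n x {i, j}"
    using mv_in_lineD[OF assms] by auto
qed

lemma card_lineD:
  assumes "x \<in> csr_verts m n" "n > 0" "i \<in> {1..m}" "j \<in> {1..m}" "i \<noteq> j"
  shows "card (lineD m n x {i,j}) = n" "finite (lineD m n x {i,j})"
proof -
  have "inj_on (\<lambda>t. mv n x i j t) {0..<int n}"
    by (rule inj_onI) (metis assms(5) mv_i)
  then show "card (lineD m n x {i,j}) = n"
    unfolding lineD_image[OF assms] by (simp add: card_image)
  show "finite (lineD m n x {i,j})"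
    unfolding lineD_image[OF assms] by simp
qed

lemma coset_lineD:
  assumes "x \<in> csr_verts m n" "n > 0" "a \<in> {1..m}" "b \<in> {1..m}" "a \<noteq> b"
  shows "coset n x (S_set n a b) = lineD m n x {a,b}"
proof
  show "coset n x (S_set n a b) \<subseteq> lineD m n x {a, b}"
  proof
    fix z assume "z \<in> coset n x (S_set n a b)"
    then obtain \<alpha> where al: "\<alpha> \<in> {0..<int n}"
      and z: "z = vadd n x (\<lambda>i. (\<alpha> * (unitv a i - unitv b i)) mod int n)"
      by (auto simp: coset_def S_set_def)
    have za: "z a = (x a + \<alpha>) mod int n" using z al assms(5)
      by (simp add: vadd_def unitv_def mod_add_right_eq)
    have "mv n x a b (z a) \<in> lineD m n x {a,b}"
      by (intro mv_in_lineD assms) (auto simp: za assms(2))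
    moreover have "z = mv n x a b (z a)"
    proof
      fix i show "z i = mv n x a b (z a) i"
      proof (cases "i = a")
        case True then show ?thesis using assms(5) by (simp add: mv_i)
      next
        case ia: False
        show ?thesis
        proof (cases "i = b")
          case True
          have "z b = (x b + (- \<alpha>) mod int n) mod int n" using z assms(5)
            by (simp add: vadd_def unitv_def)
          also have "\<dots> = (x b + x a - (x a + \<alpha>) mod int n) mod int n"
          proof -
            have "(x b + (- \<alpha>) mod int n) mod int n = (x b - \<alpha>) mod int n"
              by (metis mod_add_right_eq diff_conv_add_uminus)
            moreover have "(x b + x a - (x a + \<alpha>) mod int n) mod int n = (x b - \<alpha>) mod int n"
              by (simp add: mod_diff_right_eq)
            ultimately show ?thesis by simp
          qed
          finally show ?thesis using True za by (simp add: mv_j)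
        next
          case False
          have "z i = x i mod int n" using z ia False by (simp add: vadd_def unitv_def)
          also have "\<dots> = x i"
            using vertsD[OF assms(1)] verts_out[OF assms(1)] by (cases "i \<in> {1..m}") auto
          finally show ?thesis using ia False by (simp add: mv_other)
        qed
      qed
    qed
    ultimately show "z \<in> lineD m n x {a,b}" by simp
  qed
next
  show "lineD m n x {a, b} \<subseteq> coset n x (S_set n a b)"
  proof
    fix z assume zl: "z \<in> lineD m n x {a,b}"
    then have zm: "z = mv n x a b (z a)" using lineD_mv_eq[OF assms zl] by simp
    have zv: "z \<in> csr_verts m n" using zl by (simp add: lineD_def)
    define \<alpha> where "\<alpha> = (z a - x a) mod int n"
    have al: "\<alpha> \<in> {0..<int n}" using assms(2) by (simp add: \<alpha>_def)
    have "z = vadd n x (\<lambda>i. (\<alpha> * (unitv a i - unitv b i)) mod int n)"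
    proof
      fix i show "z i = vadd n x (\<lambda>i. (\<alpha> * (unitv a i - unitv b i)) mod int n) i"
      proof (cases "i = a")
        case True
        have "z a = (x a + \<alpha>) mod int n"
          using vertsD[OF zv assms(3)] by (simp add: \<alpha>_def mod_add_right_eq)
        then show ?thesis using True assms(5) by (simp add: vadd_def unitv_def mod_add_right_eq)
      next
        case ia: False
        show ?thesis
        proof (cases "i = b")
          case True
          have "z b = (x b + x a - z a) mod int n" using zm by (metis mv_j)
          also have "\<dots> = (x b + (- \<alpha>) mod int n) mod int n"
            unfolding \<alpha>_def
            by (metis (no_types, opaque_lifting) add_diff_eq minus_diff_eq mod_add_right_eq mod_minus_eq)
          finally show ?thesis using True assms(5) by (simp add: vadd_def unitv_def)
        next
          case False
          have "z i = x i" using zm ia False by (metis mv_other)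
          also have "\<dots> = x i mod int n"
            using vertsD[OF assms(1)] verts_out[OF assms(1)] by (cases "i \<in> {1..m}") auto
          finally show ?thesis using ia False by (simp add: vadd_def unitv_def)
        qed
      qed
    qed
    then show "z \<in> coset n x (S_set n a b)"
      using al unfolding coset_def S_set_def by blast
  qed
qed

lemma dset_eqE: "dset m x y = S \<Longrightarrow> l \<in> S \<Longrightarrow> l \<in> {1..m} \<and> x l \<noteq> y l"
  by (auto simp: dset_def)

lemma dset_out:
  assumes "x \<in> csr_verts m n" "y \<in> csr_verts m n" "dset m x y \<subseteq> S" "l \<notin> S"
  shows "x l = y l"
proof (cases "l \<in> {1..m}")
  case True then show ?thesis using assms(3,4) by (auto simp: dset_def)
next
  case False then show ?thesis using verts_out assms(1,2) by metis
qed

lemma dset_subI: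
  assumes "\<And>l. l \<in> {1..m} \<Longrightarrow> l \<notin> S \<Longrightarrow> x l = y l"
  shows "dset m x y \<subseteq> S"
  using assms by (auto simp: dset_def)

lemma N_lemma:
  assumes Y: "Y \<in> csr_verts m n" and V: "V \<in> csr_verts m n" and U: "U \<in> csr_verts m n"
    and YV: "dset m Y V = {p,q}" and pq: "p \<noteq> q"
    and YU: "csr_adj m Y U" and VU: "csr_adj m V U" and nl: "\<not> dset m Y U \<subseteq> {p,q}"
  shows "\<exists>i k. i \<in> {p,q} \<and> k \<notin> {p,q} \<and> dset m Y U = {i,k} \<and> U i = V i"
proof -
  obtain i j where ij: "i \<noteq> j" "dset m Y U = {i,j}" using adj_pair[OF YU] by blast
  have aux: "U i' = V i'" if h: "dset m Y U = {i',j'}" "i' \<in> {p,q}" "j' \<notin> {p,q}" for i' j'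
  proof (rule ccontr)
    assume ne: "U i' \<noteq> V i'"
    obtain i2 where i2: "i2 \<in> {p,q}" "i2 \<noteq> i'" using h(2) pq by blast
    have m1: "i' \<in> dset m V U" using dset_eqE[OF YV h(2)] ne by (auto simp: mem_dset)
    have "Y i2 = U i2" using dset_out[OF Y U, of "{i',j'}" i2] h i2 by auto
    then have m2: "i2 \<in> dset m V U" using dset_eqE[OF YV i2(1)] by (auto simp: mem_dset)
    have "Y j' = V j'" using dset_out[OF Y V, of "{p,q}" j'] YV h by auto
    then have m3: "j' \<in> dset m V U" using dset_eqE[OF h(1), of j'] by (auto simp: mem_dset)
    show False using not_adj3[OF m1 m2 m3] VU i2 h by auto
  qed
  show ?thesis
  proof (cases "i \<in> {p,q}")
    case True
    then have "j \<notin> {p,q}" using nl ij by auto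
    then show ?thesis using aux[OF ij(2) True] True ij by blast
  next
    case iF: False
    show ?thesis
    proof (cases "j \<in> {p,q}")
      case True
      have e: "dset m Y U = {j,i}" using ij by auto
      then show ?thesis using aux[OF e True iF] True iF by blast
    next
      case jF: False
      have "Y p = U p" using dset_out[OF Y U, of "{i,j}" p] ij iF jF by auto
      then have m1: "p \<in> dset m V U" using dset_eqE[OF YV, of p] by (auto simp: mem_dset)
      have "Y q = U q" using dset_out[OF Y U, of "{i,j}" q] ij iF jF by auto
      then have m2: "q \<in> dset m V U" using dset_eqE[OF YV, of q] by (auto simp: mem_dset)
      have "Y i = V i" using dset_out[OF Y V, of "{p,q}" i] YV iF by auto
      then have m3: "i \<in> dset m V U" using dset_eqE[OF ij(2), of i] by (auto simp: mem_dset)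
      show ?thesis using not_adj3[OF m1 m2 m3] VU pq iF by auto
    qed
  qed
qed

lemma two_elems:
  fixes A :: "int set"
  assumes "finite A" "card A \<ge> 2"
  shows "\<exists>x y. x \<in> A \<and> y \<in> A \<and> x \<noteq> y"
proof -
  obtain x where x: "x \<in> A" using assms by fastforce
  have "card (A - {x}) \<ge> 1" using assms x by (simp add: card_Diff_singleton)
  then have "A - {x} \<noteq> {}" by (metis card.empty not_one_le_zero)
  then obtain y where "y \<in> A - {x}" by blast
  then show ?thesis using x by blast
qed

lemma two_values:
  fixes u v :: int
  assumes "n \<ge> 4"
  shows "\<exists>t1 t2. t1 \<in> {0..<int n} \<and> t2 \<in> {0..<int n} \<and> t1 \<noteq> t2 \<and> t1 \<notin> {u,v} \<and> t2 \<notin> {u,v}"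
proof -
  have "card {0..<int n} - card {u,v} \<le> card ({0..<int n} - {u,v})"
    by (rule diff_card_le_card_Diff) auto
  moreover have "card {u,v} \<le> 2" by (simp add: card_insert_le_m1)
  ultimately have "card ({0..<int n} - {u,v}) \<ge> 2" using assms by simp
  then obtain t1 t2 where "t1 \<in> {0..<int n} - {u,v}" "t2 \<in> {0..<int n} - {u,v}" "t1 \<noteq> t2"
    using two_elems[of "{0..<int n} - {u,v}"] by auto
  then show ?thesis by blast
qed

locale aut_ctx =
  fixes m n :: nat and \<psi> :: "(nat \<Rightarrow> int) \<Rightarrow> (nat \<Rightarrow> int)"
  assumes n4: "n \<ge> 4" and aut: "csr_aut m n \<psi>"
begin

lemma n0: "n > 0" using n4 by simp

lemma psiV: "x \<in> csr_verts m n \<Longrightarrow> \<psi> x \<in> csr_verts m n"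
  using aut unfolding csr_aut_def bij_betw_def by blast

lemma psi_inj: "x \<in> csr_verts m n \<Longrightarrow> y \<in> csr_verts m n \<Longrightarrow> \<psi> x = \<psi> y \<Longrightarrow> x = y"
  using aut unfolding csr_aut_def bij_betw_def inj_on_def by blast

lemma psi_adj: "x \<in> csr_verts m n \<Longrightarrow> y \<in> csr_verts m n \<Longrightarrow> csr_adj m (\<psi> x) (\<psi> y) \<longleftrightarrow> csr_adj m x y"
  using aut unfolding csr_aut_def by blast

lemma lineD_V: "z \<in> lineD m n x P \<Longrightarrow> z \<in> csr_verts m n"
  by (simp add: lineD_def)

lemma lineD_sub: "z \<in> lineD m n x P \<Longrightarrow> dset m x z \<subseteq> P"
  by (simp add: lineD_def)

lemma not_in_img:
  assumes good: "\<psi> ` lineD m n y {a,b} = lineD m n (\<psi> y) {p,q}"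
    and z: "z \<in> csr_verts m n" and c: "c \<in> dset m y z" "c \<notin> {a,b}"
  shows "\<not> dset m (\<psi> y) (\<psi> z) \<subseteq> {p,q}"
proof
  assume "dset m (\<psi> y) (\<psi> z) \<subseteq> {p,q}"
  then have "\<psi> z \<in> lineD m n (\<psi> y) {p,q}" using psiV[OF z] by (simp add: lineD_def)
  then obtain x where x: "x \<in> lineD m n y {a,b}" "\<psi> x = \<psi> z" using good by (metis imageE)
  then have "x = z" using psi_inj[OF lineD_V[OF x(1)] z] by simp
  then show False using x(1) c by (auto simp: lineD_def)
qed

lemma img_in:
  assumes good: "\<psi> ` lineD m n y {a,b} = lineD m n (\<psi> y) {p,q}"
    and "x \<in> lineD m n y {a,b}"
  shows "\<psi> x \<in> lineD m n (\<psi> y) {p,q}"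
  using assms by blast

lemma Zpart:
  assumes good: "\<psi> ` lineD m n y {a,b} = lineD m n (\<psi> y) {p,q}"
    and y: "y \<in> csr_verts m n"
    and abc: "a \<in> {1..m}" "b \<in> {1..m}" "c \<in> {1..m}" "a \<noteq> b" "a \<noteq> c" "b \<noteq> c"
    and pq: "p \<noteq> q"
    and u: "u \<in> csr_verts m n" "dset m y u = {a,c}"
    and w: "w \<in> csr_verts m n" "dset m y w = {b,c}" "u c = w c"
    and v: "v \<in> lineD m n y {a,b}" "v a = u a"
    and ik: "i \<in> {p,q}" "k \<notin> {p,q}" "dset m (\<psi> y) (\<psi> u) = {i,k}" "\<psi> u i = \<psi> v i"
      "dset m (\<psi> y) (\<psi> w) = {i,k}"
    and z: "z \<in> lineD m n y {a,c}" "z \<noteq> y" "z \<noteq> u"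
  shows "\<exists>i'. i' \<in> {p,q} \<and> i' \<noteq> i \<and> dset m (\<psi> y) (\<psi> z) = {i',k} \<and> \<psi> z k = \<psi> u k"
proof -
  obtain i2 where i2: "i2 \<in> {p,q}" "i2 \<noteq> i" "{p,q} = {i,i2}" using ik(1) pq by blast
  have zV: "z \<in> csr_verts m n" using z by (simp add: lineD_def)
  have Dz: "dset m y z = {a,c}"
    using z(2) by (intro dset_sub_eq[OF y zV n0 lineD_sub[OF z(1)] _ abc(5)]) auto
  have za: "z a \<noteq> u a"
  proof
    assume "z a = u a"
    then have "z = u" using F4[OF y zV u(1) n0 lineD_sub[OF z(1)]] u(2) by auto
    then show False using z(3) by simp
  qed
  have zc: "z c \<noteq> u c"
  proof
    assume "z c = u c"
    moreover have "dset m y z \<subseteq> {c,a}" "dset m y u \<subseteq> {c,a}" using Dz u(2) by auto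
    ultimately have "z = u" using F4[OF y zV u(1) n0] by blast
    then show False using z(3) by simp
  qed
  have zya: "z a \<noteq> y a" "z c \<noteq> y c" using dset_eqE[OF Dz, of a] dset_eqE[OF Dz, of c] by auto
  define vz where "vz = mv n y a b (z a)"
  have vzl: "vz \<in> lineD m n y {a,b}" unfolding vz_def
    using vertsD[OF zV abc(1)] by (intro mv_in_lineD y n0 abc) auto
  have vzV: "vz \<in> csr_verts m n" using lineD_V[OF vzl] .
  have vza: "vz a = z a" unfolding vz_def using abc by (simp add: mv_i)
  have vV: "v \<in> csr_verts m n" using lineD_V[OF v(1)] .
  have vzv: "vz \<noteq> v" using vza v(2) za by auto
  have pvz: "\<psi> vz \<in> lineD m n (\<psi> y) {p,q}" "\<psi> v \<in> lineD m n (\<psi> y) {p,q}"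
    using good vzl v(1) by blast+
  have vzy: "vz \<noteq> y" using vza zya by auto
  have "\<psi> y \<noteq> \<psi> vz" using psi_inj[OF y vzV] vzy by auto
  then have dvz: "dset m (\<psi> y) (\<psi> vz) = {p,q}"
    by (rule dset_sub_eq[OF psiV[OF y] psiV[OF vzV] n0 lineD_sub[OF pvz(1)] _ pq])
  have vi: "\<psi> vz i \<noteq> \<psi> v i"
  proof
    assume "\<psi> vz i = \<psi> v i"
    then have "\<psi> vz = \<psi> v"
      using F4[OF psiV[OF y] psiV[OF vzV] psiV[OF vV] n0, of i i2] lineD_sub[OF pvz(1)]
        lineD_sub[OF pvz(2)] i2(3) by auto
    then show False using psi_inj[OF vzV vV] vzv by simp
  qed
  have yc_vz: "vz c = y c" using dset_out[OF y vzV lineD_sub[OF vzl], of c] abc by auto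
  have "dset m z vz \<subseteq> {b,c}"
  proof (rule dset_subI)
    fix l assume l: "l \<in> {1..m}" "l \<notin> {b,c}"
    show "z l = vz l"
    proof (cases "l = a")
      case True then show ?thesis using vza by simp
    next
      case False
      then have "y l = z l" "y l = vz l"
        using dset_out[OF y zV, of "{a,c}" l] dset_out[OF y vzV lineD_sub[OF vzl], of l] Dz l by auto
      then show ?thesis by simp
    qed
  qed
  moreover have "z \<noteq> vz" using yc_vz zya by auto
  ultimately have adj_zvz: "csr_adj m z vz"
    by (rule adj_of_sub[OF zV vzV n0 _ _ abc(6)])
  have adj_yz: "csr_adj m y z" using Dz abc by (simp add: adj_iff)
  have zy: "dset m z y = {a,c}" using Dz dset_sym by metis
  have "dset m z u \<subseteq> dset m z y \<union> dset m y u" by (rule dset_trans)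
  then have "dset m z u \<subseteq> {a,c}" by (simp add: zy u(2))
  then have adj_zu: "csr_adj m z u" by (rule adj_of_sub[OF zV u(1) n0 _ z(3) abc(5)])
  have wa: "w a = y a" using dset_out[OF y w(1), of "{b,c}" a] w(2) abc by auto
  have wb: "w b \<noteq> y b" using dset_eqE[OF w(2), of b] by auto
  have zb: "z b = y b" using dset_out[OF y zV, of "{a,c}" b] Dz abc by auto
  have nadj_zw: "\<not> csr_adj m z w"
  proof (rule not_adj3)
    show "a \<in> dset m z w" using abc zya wa by (auto simp: mem_dset)
    show "b \<in> dset m z w" using abc zb wb by (auto simp: mem_dset)
    show "c \<in> dset m z w" using abc zc w(3) by (auto simp: mem_dset)
  qed (use abc in auto)
  have nl: "\<not> dset m (\<psi> y) (\<psi> z) \<subseteq> {p,q}"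
    using not_in_img[OF good zV] Dz abc by auto
  obtain i' k' where N: "i' \<in> {p,q}" "k' \<notin> {p,q}" "dset m (\<psi> y) (\<psi> z) = {i',k'}"
      "\<psi> z i' = \<psi> vz i'"
  proof -
    have "csr_adj m (\<psi> y) (\<psi> z)" using adj_yz psi_adj[OF y zV] by simp
    moreover have "csr_adj m (\<psi> vz) (\<psi> z)" using adj_zvz adj_sym psi_adj[OF vzV zV] by blast
    ultimately show ?thesis
      using N_lemma[OF psiV[OF y] psiV[OF vzV] psiV[OF zV] dvz pq _ _ nl] that by blast
  qed
  have A_zu: "csr_adj m (\<psi> z) (\<psi> u)" using adj_zu psi_adj[OF zV u(1)] by simp
  have NA_zw: "\<not> csr_adj m (\<psi> z) (\<psi> w)" using nadj_zw psi_adj[OF zV w(1)] by simp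
  have Y: "\<psi> y \<in> csr_verts m n" and Z: "\<psi> z \<in> csr_verts m n" and U: "\<psi> u \<in> csr_verts m n"
    and W: "\<psi> w \<in> csr_verts m n" using psiV y zV u w by auto
  show ?thesis
  proof (cases "i' = i")
    case True
    have kk: "k' = k"
    proof (rule ccontr)
      assume kne: "k' \<noteq> k"
      have m1: "i \<in> dset m (\<psi> z) (\<psi> u)"
        using N(4) True vi ik(4) dset_eqE[OF ik(3)] by (auto simp: mem_dset)
      have "\<psi> y k = \<psi> z k" using dset_out[OF Y Z, of "{i',k'}" k] N(3) kne ik(2) ik(1) True by auto
      then have m2: "k \<in> dset m (\<psi> z) (\<psi> u)" using dset_eqE[OF ik(3), of k] by (auto simp: mem_dset)
      have "\<psi> y k' = \<psi> u k'" using dset_out[OF Y U, of "{i,k}" k'] ik(3) kne N(2) ik(1) by auto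
      then have m3: "k' \<in> dset m (\<psi> z) (\<psi> u)" using dset_eqE[OF N(3), of k'] by (auto simp: mem_dset)
      show False using not_adj3[OF m1 m2 m3] A_zu kne ik(1,2) N(2) True by auto
    qed
    have "dset m (\<psi> z) (\<psi> y) = {i,k}" using N(3) True kk dset_sym by metis
    moreover have "dset m (\<psi> z) (\<psi> w) \<subseteq> dset m (\<psi> z) (\<psi> y) \<union> dset m (\<psi> y) (\<psi> w)"
      by (rule dset_trans)
    ultimately have "dset m (\<psi> z) (\<psi> w) \<subseteq> {i,k}" using ik(5) by simp
    moreover have "\<psi> z \<noteq> \<psi> w" using psi_inj[OF zV w(1)] zb wb by auto
    ultimately have "csr_adj m (\<psi> z) (\<psi> w)" using adj_of_sub[OF Z W n0] ik(1,2) by auto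
    then show ?thesis using NA_zw by simp
  next
    case False
    then have i'2: "i' = i2" using N(1) i2 ik(1) by auto
    have kk: "k' = k"
    proof (rule ccontr)
      assume kne: "k' \<noteq> k"
      have "\<psi> y i = \<psi> z i" using dset_out[OF Y Z, of "{i',k'}" i] N(3) False N(2) ik(1) by auto
      then have m1: "i \<in> dset m (\<psi> z) (\<psi> u)" using dset_eqE[OF ik(3), of i] by (auto simp: mem_dset)
      have "\<psi> y i' = \<psi> u i'" using dset_out[OF Y U, of "{i,k}" i'] ik(3) False N(1) ik(2) by auto
      then have m2: "i' \<in> dset m (\<psi> z) (\<psi> u)" using dset_eqE[OF N(3), of i'] by (auto simp: mem_dset)
      have "\<psi> y k = \<psi> z k" using dset_out[OF Y Z, of "{i',k'}" k] N(3) kne ik(2) N(1) by auto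
      then have m3: "k \<in> dset m (\<psi> z) (\<psi> u)" using dset_eqE[OF ik(3), of k] by (auto simp: mem_dset)
      show False using not_adj3[OF m1 m2 m3] A_zu False ik(2) N(1) ik(1) by auto
    qed
    have zk: "\<psi> z k = \<psi> u k"
    proof (rule ccontr)
      assume kne: "\<psi> z k \<noteq> \<psi> u k"
      have "\<psi> y i = \<psi> z i" using dset_out[OF Y Z, of "{i',k'}" i] N(3) False N(2) ik(1) by auto
      then have m1: "i \<in> dset m (\<psi> z) (\<psi> u)" using dset_eqE[OF ik(3), of i] by (auto simp: mem_dset)
      have "\<psi> y i' = \<psi> u i'" using dset_out[OF Y U, of "{i,k}" i'] ik(3) False N(1) ik(2) by auto
      then have m2: "i' \<in> dset m (\<psi> z) (\<psi> u)" using dset_eqE[OF N(3), of i'] by (auto simp: mem_dset)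
      have m3: "k \<in> dset m (\<psi> z) (\<psi> u)" using kne dset_eqE[OF ik(3), of k] by (auto simp: mem_dset)
      show False using not_adj3[OF m1 m2 m3] A_zu False ik(2) N(1) ik(1) by auto
    qed
    show ?thesis using N(1,3) False kk zk by blast
  qed
qed

end

context aut_ctx begin

lemma Eprime:
  assumes good: "\<psi> ` lineD m n y {a,b} = lineD m n (\<psi> y) {p,q}"
    and y: "y \<in> csr_verts m n"
    and abc: "a \<in> {1..m}" "b \<in> {1..m}" "c \<in> {1..m}" "a \<noteq> b" "a \<noteq> c" "b \<noteq> c"
    and pq: "p \<noteq> q"
    and u: "u \<in> csr_verts m n" "dset m y u = {a,c}"
    and w: "w \<in> csr_verts m n" "dset m y w = {b,c}" "u c = w c"
    and v: "v \<in> lineD m n y {a,b}" "v a = u a"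
    and v': "v' \<in> lineD m n y {a,b}" "v' b = w b" "v \<noteq> v'"
  shows "dset m (\<psi> u) (\<psi> w) \<subseteq> {p,q}"
proof -
  have vV: "v \<in> csr_verts m n" and v'V: "v' \<in> csr_verts m n" using v v' lineD_V by auto
  have Y: "\<psi> y \<in> csr_verts m n" and U: "\<psi> u \<in> csr_verts m n" and W: "\<psi> w \<in> csr_verts m n"
    and PV: "\<psi> v \<in> csr_verts m n" and PV': "\<psi> v' \<in> csr_verts m n"
    using psiV y u w vV v'V by auto
  have ua: "u a \<noteq> y a" "u c \<noteq> y c" using dset_eqE[OF u(2), of a] dset_eqE[OF u(2), of c] by auto
  have wb: "w b \<noteq> y b" "w c \<noteq> y c" using dset_eqE[OF w(2), of b] dset_eqE[OF w(2), of c] by auto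
  have ub: "u b = y b" using dset_out[OF y u(1), of "{a,c}" b] u(2) abc by auto
  have wa: "w a = y a" using dset_out[OF y w(1), of "{b,c}" a] w(2) abc by auto
  have vc: "v c = y c" using dset_out[OF y vV lineD_sub[OF v(1)], of c] abc by auto
  have v'c: "v' c = y c" using dset_out[OF y v'V lineD_sub[OF v'(1)], of c] abc by auto
  have "dset m u v \<subseteq> {b,c}"
  proof (rule dset_subI)
    fix l assume l: "l \<in> {1..m}" "l \<notin> {b,c}"
    show "u l = v l"
    proof (cases "l = a")
      case True then show ?thesis using v(2) by simp
    next
      case False
      then have "y l = u l" "y l = v l"
        using dset_out[OF y u(1), of "{a,c}" l] dset_out[OF y vV lineD_sub[OF v(1)], of l] u(2) l by auto
      then show ?thesis by simp
    qed
  qed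
  moreover have "u \<noteq> v" using ua vc by auto
  ultimately have adj_uv: "csr_adj m u v" by (rule adj_of_sub[OF u(1) vV n0 _ _ abc(6)])
  have "dset m w v' \<subseteq> {a,c}"
  proof (rule dset_subI)
    fix l assume l: "l \<in> {1..m}" "l \<notin> {a,c}"
    show "w l = v' l"
    proof (cases "l = b")
      case True then show ?thesis using v'(2) by simp
    next
      case False
      then have "y l = w l" "y l = v' l"
        using dset_out[OF y w(1), of "{b,c}" l] dset_out[OF y v'V lineD_sub[OF v'(1)], of l] w(2) l by auto
      then show ?thesis by simp
    qed
  qed
  moreover have "w \<noteq> v'" using wb v'c by auto
  ultimately have adj_wv': "csr_adj m w v'" by (rule adj_of_sub[OF w(1) v'V n0 _ _ abc(5)])
  have adj_yu: "csr_adj m y u" using u(2) abc by (simp add: adj_iff)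
  have adj_yw: "csr_adj m y w" using w(2) abc by (simp add: adj_iff)
  have "dset m u w \<subseteq> {a,b}"
  proof (rule dset_subI)
    fix l assume l: "l \<in> {1..m}" "l \<notin> {a,b}"
    show "u l = w l"
    proof (cases "l = c")
      case True then show ?thesis using w(3) by simp
    next
      case False
      then have "y l = u l" "y l = w l"
        using dset_out[OF y u(1), of "{a,c}" l] dset_out[OF y w(1), of "{b,c}" l] u(2) w(2) l by auto
      then show ?thesis by simp
    qed
  qed
  moreover have "u \<noteq> w" using ua wa by auto
  ultimately have adj_uw: "csr_adj m u w" by (rule adj_of_sub[OF u(1) w(1) n0 _ _ abc(4)])
  have pv: "\<psi> v \<in> lineD m n (\<psi> y) {p,q}" "\<psi> v' \<in> lineD m n (\<psi> y) {p,q}"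
    using good v(1) v'(1) by blast+
  have "\<psi> y \<noteq> \<psi> v" using psi_inj[OF y vV] ua v(2) by auto
  then have dv: "dset m (\<psi> y) (\<psi> v) = {p,q}"
    by (rule dset_sub_eq[OF Y PV n0 lineD_sub[OF pv(1)] _ pq])
  have "\<psi> y \<noteq> \<psi> v'" using psi_inj[OF y v'V] wb v'(2) by auto
  then have dv': "dset m (\<psi> y) (\<psi> v') = {p,q}"
    by (rule dset_sub_eq[OF Y PV' n0 lineD_sub[OF pv(2)] _ pq])
  have nlu: "\<not> dset m (\<psi> y) (\<psi> u) \<subseteq> {p,q}"
    using not_in_img[OF good u(1), of c] u(2) abc by auto
  have nlw: "\<not> dset m (\<psi> y) (\<psi> w) \<subseteq> {p,q}"
    using not_in_img[OF good w(1), of c] w(2) abc by auto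
  have A1: "csr_adj m (\<psi> y) (\<psi> u)" using adj_yu psi_adj[OF y u(1)] by simp
  have A2: "csr_adj m (\<psi> v) (\<psi> u)" using adj_uv adj_sym psi_adj[OF vV u(1)] by blast
  have A3: "csr_adj m (\<psi> y) (\<psi> w)" using adj_yw psi_adj[OF y w(1)] by simp
  have A4: "csr_adj m (\<psi> v') (\<psi> w)" using adj_wv' adj_sym psi_adj[OF v'V w(1)] by blast
  have A5: "csr_adj m (\<psi> u) (\<psi> w)" using adj_uw psi_adj[OF u(1) w(1)] by simp
  obtain i k where Nu: "i \<in> {p,q}" "k \<notin> {p,q}" "dset m (\<psi> y) (\<psi> u) = {i,k}" "\<psi> u i = \<psi> v i"
    using N_lemma[OF Y PV U dv pq A1 A2 nlu] by blast
  obtain j l where Nw: "j \<in> {p,q}" "l \<notin> {p,q}" "dset m (\<psi> y) (\<psi> w) = {j,l}" "\<psi> w j = \<psi> v' j"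
    using N_lemma[OF Y PV' W dv' pq A3 A4 nlw] by blast
  obtain i2 where i2: "i2 \<in> {p,q}" "i2 \<noteq> i" "{p,q} = {i,i2}" using Nu(1) pq by blast
  show ?thesis
  proof (cases "j = i")
    case False
    then have ji: "j = i2" using Nw(1) i2 Nu(1) by auto
    have "\<psi> y i = \<psi> w i" using dset_out[OF Y W, of "{j,l}" i] Nw(3) False Nw(2) Nu(1) by auto
    then have m1: "i \<in> dset m (\<psi> u) (\<psi> w)" using dset_eqE[OF Nu(3), of i] by (auto simp: mem_dset)
    have "\<psi> y i2 = \<psi> u i2" using dset_out[OF Y U, of "{i,k}" i2] Nu(3) i2 Nu(2) by auto
    then have m2: "i2 \<in> dset m (\<psi> u) (\<psi> w)" using dset_eqE[OF Nw(3), of i2] ji by (auto simp: mem_dset)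
    have "dset m (\<psi> u) (\<psi> w) = {i,i2}" using adj_eq2[OF A5 m1 m2] i2(2) by simp
    then show ?thesis using i2(3) by simp
  next
    case True
    have vvi: "\<psi> v i \<noteq> \<psi> v' i"
    proof
      assume "\<psi> v i = \<psi> v' i"
      moreover have "dset m (\<psi> y) (\<psi> v) \<subseteq> {i,i2}" "dset m (\<psi> y) (\<psi> v') \<subseteq> {i,i2}"
        using dv dv' i2(3) by auto
      ultimately have "\<psi> v = \<psi> v'" using F4[OF Y PV PV' n0] by blast
      then show False using psi_inj[OF vV v'V] v'(3) by simp
    qed
    have m1: "i \<in> dset m (\<psi> u) (\<psi> w)"
      using Nu(4) Nw(4) True vvi dset_eqE[OF Nu(3), of i] by (auto simp: mem_dset)
    have lk: "l = k"
    proof (rule ccontr)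
      assume lk: "l \<noteq> k"
      have "\<psi> y k = \<psi> w k" using dset_out[OF Y W, of "{j,l}" k] Nw(3) lk Nu(2) Nw(1) by auto
      then have m2: "k \<in> dset m (\<psi> u) (\<psi> w)" using dset_eqE[OF Nu(3), of k] by (auto simp: mem_dset)
      have "\<psi> y l = \<psi> u l" using dset_out[OF Y U, of "{i,k}" l] Nu(3) lk Nw(2) Nu(1) by auto
      then have m3: "l \<in> dset m (\<psi> u) (\<psi> w)" using dset_eqE[OF Nw(3), of l] by (auto simp: mem_dset)
      show False using not_adj3[OF m1 m2 m3] A5 lk Nu(1,2) Nw(2) by auto
    qed
    have Dw: "dset m (\<psi> y) (\<psi> w) = {i,k}" using Nw(3) True lk by simp
    obtain t1 t2 where t: "t1 \<in> {0..<int n}" "t2 \<in> {0..<int n}" "t1 \<noteq> t2"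
      "t1 \<notin> {y a, u a}" "t2 \<notin> {y a, u a}"
      using two_values[OF n4] by blast
    define z1 where "z1 = mv n y a c t1"
    define z2 where "z2 = mv n y a c t2"
    have z1: "z1 \<in> lineD m n y {a,c}" "z1 \<noteq> y" "z1 \<noteq> u"
    proof -
      show "z1 \<in> lineD m n y {a,c}" unfolding z1_def using t by (intro mv_in_lineD y n0 abc) auto
      have "z1 a = t1" unfolding z1_def using abc by (simp add: mv_i)
      then show "z1 \<noteq> y" "z1 \<noteq> u" using t by auto
    qed
    have z2: "z2 \<in> lineD m n y {a,c}" "z2 \<noteq> y" "z2 \<noteq> u"
    proof -
      show "z2 \<in> lineD m n y {a,c}" unfolding z2_def using t by (intro mv_in_lineD y n0 abc) auto
      have "z2 a = t2" unfolding z2_def using abc by (simp add: mv_i)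
      then show "z2 \<noteq> y" "z2 \<noteq> u" using t by auto
    qed
    have z12: "z1 \<noteq> z2"
    proof -
      have "z1 a = t1" "z2 a = t2" unfolding z1_def z2_def using abc by (simp_all add: mv_i)
      then show ?thesis using t(3) by auto
    qed
    obtain i' where Z1: "i' \<in> {p,q}" "i' \<noteq> i" "dset m (\<psi> y) (\<psi> z1) = {i',k}" "\<psi> z1 k = \<psi> u k"
      using Zpart[OF good y abc pq u w v Nu(1,2,3,4) Dw z1] by blast
    obtain i'' where Z2: "i'' \<in> {p,q}" "i'' \<noteq> i" "dset m (\<psi> y) (\<psi> z2) = {i'',k}" "\<psi> z2 k = \<psi> u k"
      using Zpart[OF good y abc pq u w v Nu(1,2,3,4) Dw z2] by blast
    have "i' = i''" using Z1(1,2) Z2(1,2) Nu(1) by auto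
    have z1V: "z1 \<in> csr_verts m n" and z2V: "z2 \<in> csr_verts m n" using z1 z2 lineD_V by auto
    have "\<psi> z1 = \<psi> z2"
    proof (rule F4[OF Y psiV[OF z1V] psiV[OF z2V] n0])
      show "dset m (\<psi> y) (\<psi> z1) \<subseteq> {k,i'}" using Z1(3) by auto
      show "dset m (\<psi> y) (\<psi> z2) \<subseteq> {k,i'}" using Z2(3) \<open>i' = i''\<close> by auto
      show "\<psi> z1 k = \<psi> z2 k" using Z1(4) Z2(4) by simp
    qed
    then show ?thesis using psi_inj[OF z1V z2V] z12 by simp
  qed
qed

end

lemma CL:
  assumes W: "W \<in> csr_verts m n" and V1: "V1 \<in> csr_verts m n" and V2: "V2 \<in> csr_verts m n"
    and X: "X \<in> csr_verts m n" and n0: "n > 0"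
    and d1: "dset m W V1 \<subseteq> {p,q}" and d2: "dset m W V2 \<subseteq> {p,q}"
    and ne: "V1 \<noteq> V2" "V1 \<noteq> W" "V2 \<noteq> W" and pq: "p \<noteq> q"
    and a1: "csr_adj m W X" and a2: "csr_adj m V1 X" and a3: "csr_adj m V2 X"
  shows "dset m W X \<subseteq> {p,q}"
proof (rule ccontr)
  assume nl: "\<not> dset m W X \<subseteq> {p,q}"
  have e1: "dset m W V1 = {p,q}" using dset_sub_eq[OF W V1 n0 d1 _ pq] ne(2) by metis
  have e2: "dset m W V2 = {p,q}" using dset_sub_eq[OF W V2 n0 d2 _ pq] ne(3) by metis
  obtain i k where N1: "i \<in> {p,q}" "k \<notin> {p,q}" "dset m W X = {i,k}" "X i = V1 i"
    using N_lemma[OF W V1 X e1 pq a1 a2 nl] by blast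
  obtain i' k' where N2: "i' \<in> {p,q}" "k' \<notin> {p,q}" "dset m W X = {i',k'}" "X i' = V2 i'"
    using N_lemma[OF W V2 X e2 pq a1 a3 nl] by blast
  have "i' \<in> {i,k}" using N1(3) N2(3) by auto
  then have ii: "i' = i" using N2(1) N1(2) by auto
  obtain i2 where i2: "{p,q} = {i,i2}" using N1(1) by blast
  have "V1 = V2"
  proof (rule F4[OF W V1 V2 n0])
    show "dset m W V1 \<subseteq> {i,i2}" "dset m W V2 \<subseteq> {i,i2}" using d1 d2 i2 by auto
    show "V1 i = V2 i" using N1(4) N2(4) ii by simp
  qed
  then show False using ne(1) by simp
qed

context aut_ctx begin

lemma E2:
  assumes good: "\<psi> ` lineD m n x {a,b} = lineD m n (\<psi> x) {p,q}"
    and x: "x \<in> csr_verts m n"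
    and abc: "a \<in> {1..m}" "b \<in> {1..m}" "c \<in> {1..m}" "a \<noteq> b" "a \<noteq> c" "b \<noteq> c"
    and pq: "p \<noteq> q"
    and t: "0 \<le> t" "t < int n" "t \<noteq> x c" "(2 * (t - x c)) mod int n \<noteq> 0"
  shows "dset m (\<psi> (mv n x c a t)) (\<psi> (mv n x c b t)) \<subseteq> {p,q}"
proof -
  define u where "u = mv n x c a t"
  define w where "w = mv n x c b t"
  have uV: "u \<in> csr_verts m n" unfolding u_def using t abc by (intro mv_verts x n0) auto
  have wV: "w \<in> csr_verts m n" unfolding w_def using t abc by (intro mv_verts x n0) auto
  have uc: "u c = t" "w c = t" unfolding u_def w_def using abc by (simp_all add: mv_i)
  have "x \<noteq> u" using uc t(3) by auto
  have "dset m x u \<subseteq> {c,a}" unfolding u_def by (rule mv_dset)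
  then have "dset m x u = {c,a}" using \<open>x \<noteq> u\<close>
    by (rule dset_sub_eq[OF x uV n0 _ _ abc(5)[symmetric]])
  then have du: "dset m x u = {a,c}" by (simp add: insert_commute)
  have "x \<noteq> w" using uc t(3) by auto
  have "dset m x w \<subseteq> {c,b}" unfolding w_def by (rule mv_dset)
  then have "dset m x w = {c,b}" using \<open>x \<noteq> w\<close>
    by (rule dset_sub_eq[OF x wV n0 _ _ abc(6)[symmetric]])
  then have dw: "dset m x w = {b,c}" by (simp add: insert_commute)
  have ua: "u a = (x a + x c - t) mod int n" unfolding u_def by (simp add: mv_j)
  have wb: "w b = (x b + x c - t) mod int n" unfolding w_def by (simp add: mv_j)
  define v where "v = mv n x a b (u a)"
  define v' where "v' = mv n x b a (w b)"
  have vl: "v \<in> lineD m n x {a,b}" unfolding v_def ua using n0 by (intro mv_in_lineD x abc n0) auto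
  have v'l0: "v' \<in> lineD m n x {b,a}" unfolding v'_def wb using n0 abc
    by (intro mv_in_lineD x abc n0) auto
  then have v'l: "v' \<in> lineD m n x {a,b}" by (simp add: insert_commute)
  have va: "v a = u a" unfolding v_def using abc by (simp add: mv_i)
  have v'b: "v' b = w b" unfolding v'_def using abc by (simp add: mv_i)
  have vb: "v b = (x b + x a - u a) mod int n" unfolding v_def by (simp add: mv_j)
  have vne: "v \<noteq> v'"
  proof
    assume "v = v'"
    then have "v b = w b" using v'b by simp
    then have "(x b + x a - (x a + x c - t) mod int n) mod int n = (x b + x c - t) mod int n"
      using vb ua wb by simp
    then have "(x b + x a - (x a + x c - t)) mod int n = (x b + x c - t) mod int n"
      by (simp add: mod_diff_right_eq)
    then have "int n dvd ((x b + x a - (x a + x c - t)) - (x b + x c - t))"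
      by (simp add: mod_eq_dvd_iff)
    then have "int n dvd (2 * (t - x c))" by (simp add: algebra_simps)
    then show False using t(4) by simp
  qed
  show ?thesis
    using Eprime[OF good x abc pq uV du wV dw _ vl va v'l v'b vne] uc
    unfolding u_def w_def by simp
qed

lemma STEP':
  assumes good: "\<psi> ` lineD m n y {a,b} = lineD m n (\<psi> y) {p,q}"
    and y: "y \<in> csr_verts m n"
    and abc: "a \<in> {1..m}" "b \<in> {1..m}" "c \<in> {1..m}" "a \<noteq> b" "a \<noteq> c" "b \<noteq> c"
    and pq: "p \<noteq> q" "p \<in> {1..m}" "q \<in> {1..m}"
    and t: "0 \<le> t" "t < int n" "t \<noteq> y c" "(2 * (t - y c)) mod int n \<noteq> 0"
  shows "\<psi> ` lineD m n (mv n y c a t) {a,b} = lineD m n (\<psi> (mv n y c a t)) {p,q}"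
proof -
  define y' where "y' = mv n y c a t"
  define w where "w = mv n y c b t"
  define v where "v = mv n y a b (y' a)"
  have y'V: "y' \<in> csr_verts m n" unfolding y'_def using t abc by (intro mv_verts y n0) auto
  have wV: "w \<in> csr_verts m n" unfolding w_def using t abc by (intro mv_verts y n0) auto
  have y'c: "y' c = t" "w c = t" unfolding y'_def w_def using abc by (simp_all add: mv_i)
  have y'a: "y' a = (y a + y c - t) mod int n" unfolding y'_def by (simp add: mv_j)
  have y'o: "y' l = y l" if "l \<noteq> a" "l \<noteq> c" for l unfolding y'_def using that by (simp add: mv_other)
  have wo: "w l = y l" if "l \<noteq> b" "l \<noteq> c" for l unfolding w_def using that by (simp add: mv_other)
  have E1: "dset m (\<psi> y') (\<psi> w) \<subseteq> {p,q}"
    unfolding y'_def w_def by (rule E2[OF good y abc pq(1) t])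
  have vl: "v \<in> lineD m n y {a,b}" unfolding v_def y'a using n0 by (intro mv_in_lineD y abc n0) auto
  have vV: "v \<in> csr_verts m n" using lineD_V[OF vl] .
  have va: "v a = y' a" unfolding v_def using abc by (simp add: mv_i)
  have vo: "v l = y l" if "l \<noteq> a" "l \<noteq> b" for l unfolding v_def using that by (simp add: mv_other)
  have vc: "v c = y c" using vo abc by auto
  have goodv: "\<psi> ` lineD m n v {a,b} = lineD m n (\<psi> v) {p,q}"
  proof -
    have "\<psi> v \<in> lineD m n (\<psi> y) {p,q}" using good vl by blast
    then have "lineD m n (\<psi> v) {p,q} = lineD m n (\<psi> y) {p,q}" by (rule lineD_same[OF psiV[OF y]])
    moreover have "lineD m n v {a,b} = lineD m n y {a,b}" by (rule lineD_same[OF y vl])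
    ultimately show ?thesis using good by simp
  qed
  have E2v: "dset m (\<psi> (mv n v c a t)) (\<psi> (mv n v c b t)) \<subseteq> {p,q}"
    by (rule E2[OF goodv vV abc pq(1)]) (use t vc in auto)
  have vb_eq: "mv n v c b t = y'"
  proof (rule F4[OF vV _ y'V n0])
    show "mv n v c b t \<in> csr_verts m n" using t abc by (intro mv_verts vV n0) auto
    show "dset m v (mv n v c b t) \<subseteq> {c,b}" by (rule mv_dset)
    show "dset m v y' \<subseteq> {c,b}"
    proof (rule dset_subI)
      fix l assume l: "l \<in> {1..m}" "l \<notin> {c,b}"
      show "v l = y' l"
      proof (cases "l = a")
        case True then show ?thesis using va by simp
      next
        case False then show ?thesis using l vo y'o by auto
      qed
    qed
    show "mv n v c b t c = y' c" using abc y'c by (simp add: mv_i)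
  qed
  define w' where "w' = mv n v c a t"
  have w'V: "w' \<in> csr_verts m n" unfolding w'_def using t abc by (intro mv_verts vV n0) auto
  have E3: "dset m (\<psi> y') (\<psi> w') \<subseteq> {p,q}"
    using E2v unfolding w'_def vb_eq by (simp add: dset_sym)
  have w'c: "w' c = t" unfolding w'_def using abc by (simp add: mv_i)
  have w'a: "w' a = (v a + v c - t) mod int n" unfolding w'_def by (simp add: mv_j)
  have w'o: "w' l = y l" if "l \<noteq> a" "l \<noteq> b" "l \<noteq> c" for l
    unfolding w'_def using that vo by (simp add: mv_other)
  have wa: "w a = y a" using wo abc by auto
  have ww': "w \<noteq> w'"
  proof
    assume "w = w'"
    then have "y a = (y' a + y c - t) mod int n" using wa w'a va vc by simp
    also have "\<dots> = ((y a + y c - t) mod int n + y c - t) mod int n" using y'a by simp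
    also have "\<dots> = (y a + y c - t + y c - t) mod int n"
      by (metis (no_types, opaque_lifting) add_diff_eq mod_add_left_eq)
    finally have h: "y a = (y a + y c - t + y c - t) mod int n" .
    have "y a mod int n = y a" using vertsD[OF y abc(1)] by simp
    then have "(y a + y c - t + y c - t) mod int n = y a mod int n" using h by simp
    then have "int n dvd ((y a + y c - t + y c - t) - y a)" by (simp add: mod_eq_dvd_iff)
    then have "int n dvd (2 * (y c - t))" by (simp add: algebra_simps)
    then have "int n dvd (2 * (t - y c))" by (metis dvd_minus_iff minus_diff_eq mult_minus_right)
    then show False using t(4) by simp
  qed
  have wl: "dset m y' w \<subseteq> {a,b}"
  proof (rule dset_subI)
    fix l assume l: "l \<in> {1..m}" "l \<notin> {a,b}"
    show "y' l = w l"
    proof (cases "l = c")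
      case True then show ?thesis using y'c by simp
    next
      case False then show ?thesis using l y'o wo by auto
    qed
  qed
  have w'l: "dset m y' w' \<subseteq> {a,b}"
  proof (rule dset_subI)
    fix l assume l: "l \<in> {1..m}" "l \<notin> {a,b}"
    show "y' l = w' l"
    proof (cases "l = c")
      case True then show ?thesis using y'c w'c by simp
    next
      case False then show ?thesis using l y'o w'o by auto
    qed
  qed
  have y'w: "y' \<noteq> w" "y' \<noteq> w'"
  proof -
    have "y' b = y b" using y'o abc by auto
    moreover have "w b \<noteq> y b"
    proof
      assume "w b = y b"
      have "dset m y w \<subseteq> {c}"
      proof (rule dset_subI)
        fix l assume "l \<in> {1..m}" "l \<notin> {c}"
        then show "y l = w l" using wo \<open>w b = y b\<close> by (cases "l = b") auto
      qed
      then have "dset m y w = {} \<or> dset m y w = {c}" by blast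
      moreover have "w \<noteq> y" using y'c t(3) by auto
      ultimately show False using dset_empty[OF y wV] dset_single[OF y wV n0] by blast
    qed
    ultimately show "y' \<noteq> w" by auto
    have "w' a \<noteq> y' a"
    proof
      assume "w' a = y' a"
      then have "w' a = v a" using va by simp
      have "dset m v w' \<subseteq> {c}"
      proof (rule dset_subI)
        fix l assume "l \<in> {1..m}" "l \<notin> {c}"
        then show "v l = w' l" using \<open>w' a = v a\<close> unfolding w'_def
          by (cases "l = a") (auto simp: mv_other)
      qed
      then have "dset m v w' = {} \<or> dset m v w' = {c}" by blast
      moreover have "w' \<noteq> v" using w'c vc t(3) by auto
      ultimately show False using dset_empty[OF vV w'V] dset_single[OF vV w'V n0] by blast
    qed
    then show "y' \<noteq> w'" by auto
  qed
  have sub: "\<psi> ` lineD m n y' {a,b} \<subseteq> lineD m n (\<psi> y') {p,q}"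
  proof
    fix X assume "X \<in> \<psi> ` lineD m n y' {a,b}"
    then obtain x where x: "x \<in> lineD m n y' {a,b}" "X = \<psi> x" by blast
    have xV: "x \<in> csr_verts m n" using lineD_V[OF x(1)] .
    have dx: "dset m y' x \<subseteq> {a,b}" using lineD_sub[OF x(1)] .
    have "dset m (\<psi> y') (\<psi> x) \<subseteq> {p,q}"
    proof (cases "x = y' \<or> x = w \<or> x = w'")
      case True
      then show ?thesis
      proof (elim disjE)
        assume "x = y'" then show ?thesis by (simp add: dset_def)
      qed (use E1 E3 in auto)
    next
      case False
      have adj1: "csr_adj m y' x" using adj_of_sub[OF y'V xV n0 dx _ abc(4)] False by auto
      have "dset m w x \<subseteq> dset m w y' \<union> dset m y' x" by (rule dset_trans)
      moreover have "dset m w y' \<subseteq> {a,b}" using wl by (simp add: dset_sym)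
      ultimately have "dset m w x \<subseteq> {a,b}" using dx by blast
      then have adj2: "csr_adj m w x" using adj_of_sub[OF wV xV n0 _ _ abc(4)] False by auto
      have "dset m w' x \<subseteq> dset m w' y' \<union> dset m y' x" by (rule dset_trans)
      moreover have "dset m w' y' \<subseteq> {a,b}" using w'l by (simp add: dset_sym)
      ultimately have "dset m w' x \<subseteq> {a,b}" using dx by blast
      then have adj3: "csr_adj m w' x" using adj_of_sub[OF w'V xV n0 _ _ abc(4)] False by auto
      show ?thesis
      proof (rule CL[OF psiV[OF y'V] psiV[OF wV] psiV[OF w'V] psiV[OF xV] n0 E1 E3 _ _ _ pq(1)])
        show "\<psi> w \<noteq> \<psi> w'" using psi_inj[OF wV w'V] ww' by auto
        show "\<psi> w \<noteq> \<psi> y'" using psi_inj[OF wV y'V] y'w by auto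
        show "\<psi> w' \<noteq> \<psi> y'" using psi_inj[OF w'V y'V] y'w by auto
        show "csr_adj m (\<psi> y') (\<psi> x)" using adj1 psi_adj[OF y'V xV] by simp
        show "csr_adj m (\<psi> w) (\<psi> x)" using adj2 psi_adj[OF wV xV] by simp
        show "csr_adj m (\<psi> w') (\<psi> x)" using adj3 psi_adj[OF w'V xV] by simp
      qed
    qed
    then show "X \<in> lineD m n (\<psi> y') {p,q}" using x psiV[OF xV] by (simp add: lineD_def)
  qed
  have "inj_on \<psi> (lineD m n y' {a,b})" by (rule inj_onI) (use psi_inj lineD_V in blast)
  then have "card (\<psi> ` lineD m n y' {a,b}) = n"
    using card_lineD[OF y'V n0 abc(1,2,4)] by (simp add: card_image)
  moreover have "card (lineD m n (\<psi> y') {p,q}) = n" "finite (lineD m n (\<psi> y') {p,q})"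
    using card_lineD[OF psiV[OF y'V] n0 pq(2,3,1)] by auto
  ultimately have "\<psi> ` lineD m n y' {a,b} = lineD m n (\<psi> y') {p,q}"
    using sub by (metis card_subset_eq)
  then show ?thesis unfolding y'_def .
qed

end

context aut_ctx begin

lemma good_line:
  assumes good: "\<psi> ` lineD m n y {a,b} = lineD m n (\<psi> y) {p,q}"
    and y: "y \<in> csr_verts m n" and v: "v \<in> lineD m n y {a,b}"
  shows "\<psi> ` lineD m n v {a,b} = lineD m n (\<psi> v) {p,q}"
proof -
  have "\<psi> v \<in> lineD m n (\<psi> y) {p,q}" using good v by blast
  then have "lineD m n (\<psi> v) {p,q} = lineD m n (\<psi> y) {p,q}" by (rule lineD_same[OF psiV[OF y]])
  moreover have "lineD m n v {a,b} = lineD m n y {a,b}" by (rule lineD_same[OF y v])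
  ultimately show ?thesis using good by simp
qed

lemma STEP:
  assumes good: "\<psi> ` lineD m n y {a,b} = lineD m n (\<psi> y) {p,q}"
    and y: "y \<in> csr_verts m n"
    and abc: "a \<in> {1..m}" "b \<in> {1..m}" "c \<in> {1..m}" "a \<noteq> b" "a \<noteq> c" "b \<noteq> c"
    and pq: "p \<noteq> q" "p \<in> {1..m}" "q \<in> {1..m}"
    and t: "0 \<le> t" "t < int n" "t \<noteq> y c"
  shows "\<psi> ` lineD m n (mv n y c a t) {a,b} = lineD m n (\<psi> (mv n y c a t)) {p,q}"
proof (cases "(2 * (t - y c)) mod int n = 0")
  case False
  then show ?thesis using STEP'[OF good y abc pq t] by blast
next
  case True
  define t1 where "t1 = (y c + 1) mod int n"
  have t1r: "0 \<le> t1" "t1 < int n" unfolding t1_def using n0 by auto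
  have "(2 * (t1 - y c)) mod int n = (2 * (y c + 1 - y c)) mod int n"
    unfolding t1_def by (metis mod_diff_left_eq mod_mult_right_eq)
  also have "\<dots> = 2" using n4 by simp
  finally have t1m: "(2 * (t1 - y c)) mod int n = 2" .
  have t1ne: "t1 \<noteq> y c" using t1m by auto
  define y1 where "y1 = mv n y c a t1"
  have g1: "\<psi> ` lineD m n y1 {a,b} = lineD m n (\<psi> y1) {p,q}"
    unfolding y1_def by (rule STEP'[OF good y abc pq t1r t1ne]) (use t1m in simp)
  have y1V: "y1 \<in> csr_verts m n" unfolding y1_def using t1r abc by (intro mv_verts y n0) auto
  have y1c: "y1 c = t1" unfolding y1_def using abc by (simp add: mv_i)
  have tt1: "t \<noteq> t1" using True t1m by auto
  have m2: "(2 * (t - y1 c)) mod int n \<noteq> 0"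
  proof
    assume "(2 * (t - y1 c)) mod int n = 0"
    then have "int n dvd (2 * (t - t1))" using y1c by auto
    moreover have "int n dvd (2 * (t - y c))" using True by auto
    ultimately have "int n dvd (2 * (t - y c) - 2 * (t - t1))" using dvd_diff by blast
    moreover have "2 * (t - y c) - 2 * (t - t1) = 2 * (t1 - y c)" by (simp add: algebra_simps)
    ultimately have "int n dvd (2 * (t1 - y c))" by simp
    then show False using t1m by simp
  qed
  have g2: "\<psi> ` lineD m n (mv n y1 c a t) {a,b} = lineD m n (\<psi> (mv n y1 c a t)) {p,q}"
    by (rule STEP'[OF g1 y1V abc pq t(1,2)]) (use tt1 y1c m2 in auto)
  have "mv n y1 c a t = mv n y c a t"
  proof (rule F4[OF y _ _ n0])
    have y1l: "y1 \<in> lineD m n y {c,a}" unfolding y1_def using t1r abc by (intro mv_in_lineD y n0) auto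
    have "mv n y1 c a t \<in> lineD m n y1 {c,a}" using t abc by (intro mv_in_lineD y1V n0) auto
    then have "mv n y1 c a t \<in> lineD m n y {c,a}" using lineD_same[OF y y1l] by simp
    then show "mv n y1 c a t \<in> csr_verts m n" "dset m y (mv n y1 c a t) \<subseteq> {c,a}"
      using lineD_V lineD_sub by auto
    show "mv n y c a t \<in> csr_verts m n" using t abc by (intro mv_verts y n0) auto
    show "dset m y (mv n y c a t) \<subseteq> {c,a}" by (rule mv_dset)
    show "mv n y1 c a t c = mv n y c a t c" using abc by (simp add: mv_i)
  qed
  then show ?thesis using g2 by simp
qed

lemma reach:
  assumes abm: "a \<in> {1..m}" "b \<in> {1..m}" "a \<noteq> b"
    and pq: "p \<noteq> q" "p \<in> {1..m}" "q \<in> {1..m}"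
    and z: "z \<in> csr_verts m n"
  shows "x \<in> csr_verts m n \<Longrightarrow> \<psi> ` lineD m n x {a,b} = lineD m n (\<psi> x) {p,q} \<Longrightarrow>
    card {l \<in> {1..m} - {a}. x l \<noteq> z l} = N \<Longrightarrow> \<psi> ` lineD m n z {a,b} = lineD m n (\<psi> z) {p,q}"
proof (induction N arbitrary: x)
  case 0
  have "finite {l \<in> {1..m} - {a}. x l \<noteq> z l}" by simp
  then have e: "{l \<in> {1..m} - {a}. x l \<noteq> z l} = {}" using 0(3) by simp
  have "dset m x z \<subseteq> {a}"
  proof (rule dset_subI)
    fix l assume "l \<in> {1..m}" "l \<notin> {a}"
    then show "x l = z l" using e by blast
  qed
  then have "dset m x z = {} \<or> dset m x z = {a}" by blast
  then have "x = z" using dset_empty[OF 0(1) z] dset_single[OF 0(1) z n0] by blast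
  then show ?case using 0(2) by simp
next
  case (Suc N)
  have "{l \<in> {1..m} - {a}. x l \<noteq> z l} \<noteq> {}" using Suc(4) by (metis card.empty nat.distinct(1))
  then obtain l where l: "l \<in> {1..m}" "l \<noteq> a" "x l \<noteq> z l" by blast
  define x' where "x' = mv n x l a (z l)"
  have zl: "0 \<le> z l" "z l < int n" using vertsD[OF z l(1)] by auto
  have x'V: "x' \<in> csr_verts m n" unfolding x'_def using zl l abm by (intro mv_verts Suc(2) n0) auto
  have g': "\<psi> ` lineD m n x' {a,b} = lineD m n (\<psi> x') {p,q}"
  proof (cases "l = b")
    case True
    have "x' \<in> lineD m n x {l,a}" unfolding x'_def using zl abm l
      by (intro mv_in_lineD Suc(2) n0) auto
    then have "x' \<in> lineD m n x {b,a}" using True by simp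
    then have "x' \<in> lineD m n x {a,b}" by (simp add: insert_commute)
    then show ?thesis by (rule good_line[OF Suc(3) Suc(2)])
  next
    case False
    show ?thesis unfolding x'_def
      by (rule STEP[OF Suc(3) Suc(2) abm(1,2) l(1) abm(3) l(2)[symmetric] False[symmetric] pq zl])
        (use l in auto)
  qed
  have "{l' \<in> {1..m} - {a}. x' l' \<noteq> z l'} = {l' \<in> {1..m} - {a}. x l' \<noteq> z l'} - {l}"
  proof -
    have "\<And>l'. l' \<noteq> a \<Longrightarrow> x' l' = (if l' = l then z l else x l')"
      unfolding x'_def using l by (auto simp: mv_i mv_other)
    then show ?thesis using l by (auto split: if_splits)
  qed
  then have "card {l' \<in> {1..m} - {a}. x' l' \<noteq> z l'} = N"
    using Suc(4) l by (simp add: card_Diff_singleton)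
  then show ?case using Suc.IH[OF x'V g'] by simp
qed

end

theorem lemma4:
  fixes m n :: nat and \<psi> :: "(nat \<Rightarrow> int) \<Rightarrow> (nat \<Rightarrow> int)"
    and a b p q r s :: nat and \<xi> \<xi>' \<sigma> \<sigma>' :: "nat \<Rightarrow> int"
  assumes "n \<ge> 4" and "m > 3"
    and "csr_aut m n \<psi>"
    and "a \<in> {1..m}" "b \<in> {1..m}" "a \<noteq> b"
    and "\<xi> \<in> csr_verts m n" "\<xi>' \<in> csr_verts m n"
    and "\<sigma> \<in> csr_verts m n" "\<sigma>' \<in> csr_verts m n"
    and "p \<in> {1..m}" "q \<in> {1..m}" "p \<noteq> q"
    and "r \<in> {1..m}" "s \<in> {1..m}" "r \<noteq> s"
    and "\<psi> ` coset n \<xi> (S_set n a b) = coset n \<sigma> (S_set n p q)"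
    and "\<psi> ` coset n \<xi>' (S_set n a b) = coset n \<sigma>' (S_set n r s)"
  shows "{p, q} = {r, s}"
proof -
  interpret aut_ctx m n \<psi> using assms(1,3) by unfold_locales
  have h1: "\<psi> ` lineD m n \<xi> {a,b} = lineD m n \<sigma> {p,q}"
    using assms(17) coset_lineD[OF assms(7) n0 assms(4,5,6)] coset_lineD[OF assms(9) n0 assms(11,12,13)]
    by simp
  have h2: "\<psi> ` lineD m n \<xi>' {a,b} = lineD m n \<sigma>' {r,s}"
    using assms(18) coset_lineD[OF assms(8) n0 assms(4,5,6)] coset_lineD[OF assms(10) n0 assms(14,15,16)]
    by simp
  have "\<psi> \<xi> \<in> lineD m n \<sigma> {p,q}" using h1 self_in_lineD[OF assms(7)] by blast
  then have "lineD m n (\<psi> \<xi>) {p,q} = lineD m n \<sigma> {p,q}" by (rule lineD_same[OF assms(9)])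
  then have g: "\<psi> ` lineD m n \<xi> {a,b} = lineD m n (\<psi> \<xi>) {p,q}" using h1 by simp
  have "\<psi> \<xi>' \<in> lineD m n \<sigma>' {r,s}" using h2 self_in_lineD[OF assms(8)] by blast
  then have "lineD m n (\<psi> \<xi>') {r,s} = lineD m n \<sigma>' {r,s}" by (rule lineD_same[OF assms(10)])
  then have g2: "\<psi> ` lineD m n \<xi>' {a,b} = lineD m n (\<psi> \<xi>') {r,s}" using h2 by simp
  have g': "\<psi> ` lineD m n \<xi>' {a,b} = lineD m n (\<psi> \<xi>') {p,q}"
    using reach[OF assms(4,5,6) assms(13,11,12) assms(8) assms(7) g refl] .
  have L: "lineD m n (\<psi> \<xi>') {p,q} = lineD m n (\<psi> \<xi>') {r,s}" using g' g2 by simp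
  define X where "X = \<psi> \<xi>'"
  have XV: "X \<in> csr_verts m n" unfolding X_def using psiV assms(8) by simp
  define t where "t = (X p + 1) mod int n"
  have tr: "0 \<le> t" "t < int n" unfolding t_def using n0 by auto
  have tne: "t \<noteq> X p"
  proof
    assume "t = X p"
    then have "(X p + 1) mod int n = X p mod int n" using vertsD[OF XV assms(11)] unfolding t_def by simp
    then have "int n dvd 1" by (simp add: mod_eq_dvd_iff)
    then show False using n4 by simp
  qed
  define Z where "Z = mv n X p q t"
  have Zl: "Z \<in> lineD m n X {p,q}" unfolding Z_def using tr
    by (intro mv_in_lineD XV n0 assms(11,12,13)) auto
  have ZV: "Z \<in> csr_verts m n" using lineD_V[OF Zl] .
  have "Z \<noteq> X" using tne assms(13) unfolding Z_def by (metis mv_i)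
  then have dZ: "dset m X Z = {p,q}"
    using dset_sub_eq[OF XV ZV n0 lineD_sub[OF Zl] _ assms(13)] by metis
  have "Z \<in> lineD m n X {r,s}" using Zl L unfolding X_def by simp
  then have "{p,q} \<subseteq> {r,s}" using lineD_sub dZ by metis
  then show ?thesis using assms(13,16) by auto
qed


end
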